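(* Let $d\ge 1$, let $\mu\in\mathbb{R}^d$, and let $\Sigma\in\mathbb{R}^{d\times d}$ be a symmetric positive definite covariance matrix; write $\mathcal{D}=\mathcal{N}(\mu,\Sigma)$. Fix initial parameters $\theta_0\in\mathbb{R}^d$, a vector $v\in\mathbb{R}^d$, a learning rate $0<\eta<1/2$, and an integer $k\ge 1$. Define $$\theta_0^+=\theta_0-2\eta(\theta_0-v),\qquad \theta_0^-=\theta_0-2\eta(\theta_0+v),$$ and for $i=1,\dots,k$ draw $x_i^+,x_i^-$ independently from $\mathcal{D}$ (all draws mutually independent) and set $$\theta_i^+=\theta_{i-1}^+-2\eta(\theta_{i-1}^+-x_i^+),\qquad \theta_i^-=\theta_{i-1}^--2\eta(\theta_{i-1}^--x_i^-).$$ Then for every order $\alpha>1$, the R\'enyi divergence of order $\alpha$ between the distribution of $\theta_k^+$ and the distribution of $\theta_k^-$ is at most $\frac{2\alpha}{k}\,v^\top\Sigma^{-1}v$.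
   Context: This models mean estimation by per-example stochastic gradient descent on the squared $\ell_2$ loss $\|\theta-x\|^2$ (gradient $2(\theta-x)$), where a single injected example ($+v$ in one run, $-v$ in the other) is used in the very first step and all subsequent examples are fresh random samples from $\mathcal{D}$. The R\'enyi divergence of order $\alpha>1$ between distributions $P,Q$ with densities $p,q$ is $D_\alpha(P\|Q)=\frac{1}{\alpha-1}\log\int p(x)^\alpha q(x)^{1-\alpha}\,dx$. *)

theory Defs
  imports "HOL-Probability.Probability"
begin

definition sym_pos_def_mat :: "real^'n^'n \<Rightarrow> bool" where
  "sym_pos_def_mat S \<longleftrightarrow> transpose S = S \<and> (\<forall>x. x \<noteq> 0 \<longrightarrow> x \<bullet> (S *v x) > 0)"

definition mvn_density :: "real^'n \<Rightarrow> real^'n^'n \<Rightarrow> real^'n \<Rightarrow> real" where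
  "mvn_density mu S x =
     exp (- ((x - mu) \<bullet> (matrix_inv S *v (x - mu))) / 2)
       / sqrt ((2 * pi) ^ CARD('n) * det S)"

definition mvnormal :: "real^'n \<Rightarrow> real^'n^'n \<Rightarrow> (real^'n) measure" where
  "mvnormal mu S = density lborel (\<lambda>x. ennreal (mvn_density mu S x))"

text \<open>Per-example SGD on the squared loss, gradient 2(theta - x):
  starting from theta, take steps with the samples xs 1, xs 2, ..., xs i.\<close>
fun sgd_iter :: "real \<Rightarrow> real^'n \<Rightarrow> (nat \<Rightarrow> real^'n) \<Rightarrow> nat \<Rightarrow> real^'n" where
  "sgd_iter eta theta xs 0 = theta"
| "sgd_iter eta theta xs (Suc i) =
     sgd_iter eta theta xs i - (2 * eta) *\<^sub>R (sgd_iter eta theta xs i - xs (Suc i))"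

definition sgd_dist :: "real \<Rightarrow> real^'n \<Rightarrow> (real^'n) measure \<Rightarrow> nat \<Rightarrow> (real^'n) measure" where
  "sgd_dist eta theta D k = distr (PiM {1..k} (\<lambda>_. D)) borel (\<lambda>xs. sgd_iter eta theta xs k)"

definition renyi_divergence :: "real \<Rightarrow> ('a::euclidean_space) measure \<Rightarrow> 'a measure \<Rightarrow> ereal" where
  "renyi_divergence alpha P Q =
     (if \<not> absolutely_continuous Q P then \<infinity>
      else (let p = (\<lambda>x. enn2real (RN_deriv lborel P x));
                q = (\<lambda>x. enn2real (RN_deriv lborel Q x));
                I = (\<integral>\<^sup>+ x. ennreal (p x powr alpha * q x powr (1 - alpha)) \<partial>lborel)
            in if I = \<infinity> then \<infinity> else ereal (ln (enn2real I) / (alpha - 1))))"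

end

theory Submission
  imports Defs "HOL-Analysis.Analysis"
begin

lemma det_shear_matrix:
  fixes m n :: "'n::finite"
  assumes "m \<noteq> n"
  shows "det (matrix (\<lambda>v::real^'n. \<chi> i. if i = m then v $ m + v $ n else v $ i)) = 1"
proof -
  have "matrix (\<lambda>v::real^'n. \<chi> i. if i = m then v $ m + v $ n else v $ i)
      = (\<chi> k. if k = m then row m (mat 1) + 1 *s row n (mat 1) else row k (mat 1 :: real^'n^'n))"
    by (auto simp: matrix_def vec_eq_iff row_def mat_def axis_def)
  then show ?thesis using det_row_operation[OF assms, of "mat 1" 1] by simp
qed

proposition
 fixes f :: "real^'n::finite \<Rightarrow> real^'n"
  assumes "linear f" "S \<in> lmeasurable"
  shows measurable_linear_image': "(f ` S) \<in> lmeasurable"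
    and measure_linear_image': "measure lebesgue (f ` S) = \<bar>det (matrix f)\<bar> * measure lebesgue S" (is "?Q f S")
proof -
  have "\<forall>S \<in> lmeasurable. (f ` S) \<in> lmeasurable \<and> ?Q f S"
  proof (rule induct_linear_elementary [OF \<open>linear f\<close>]; intro ballI)
    fix f g and S :: "(real,'n) vec set"
    assume "linear f" and "linear g"
      and f [rule_format]: "\<forall>S \<in> lmeasurable. f ` S \<in> lmeasurable \<and> ?Q f S"
      and g [rule_format]: "\<forall>S \<in> lmeasurable. g ` S \<in> lmeasurable \<and> ?Q g S"
      and S: "S \<in> lmeasurable"
    then have gS: "g ` S \<in> lmeasurable"
      by blast
    show "(f \<circ> g) ` S \<in> lmeasurable \<and> ?Q (f \<circ> g) S"
      using f [OF gS] g [OF S] matrix_compose [OF \<open>linear g\<close> \<open>linear f\<close>]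
      by (simp add: o_def image_comp abs_mult det_mul)
  next
    fix f :: "real^'n::_ \<Rightarrow> real^'n::_" and i and S :: "(real^'n::_) set"
    assume "linear f" and 0: "\<And>x. f x $ i = 0" and "S \<in> lmeasurable"
    then have "\<not> inj f"
      by (metis (full_types) linear_injective_imp_surjective one_neq_zero surjE vec_component)
    have detf: "det (matrix f) = 0"
      using \<open>\<not> inj f\<close> det_nz_iff_inj[OF \<open>linear f\<close>] by blast
    show "f ` S \<in> lmeasurable \<and> ?Q f S"
    proof
      show "f ` S \<in> lmeasurable"
        using lmeasurable_iff_indicator_has_integral \<open>linear f\<close> \<open>\<not> inj f\<close> negligible_UNIV negligible_linear_singular_image by blast
      have "measure lebesgue (f ` S) = 0"
        by (meson \<open>\<not> inj f\<close> \<open>linear f\<close> negligible_imp_measure0 negligible_linear_singular_image)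
      also have "\<dots> = \<bar>det (matrix f)\<bar> * measure lebesgue S"
        by (simp add: detf)
      finally show "?Q f S" .
    qed
  next
    fix c and S :: "(real^'n::_) set"
    assume "S \<in> lmeasurable"
    show "(\<lambda>a. \<chi> i. c i * a $ i) ` S \<in> lmeasurable \<and> ?Q (\<lambda>a. \<chi> i. c i * a $ i) S"
    proof
      show "(\<lambda>a. \<chi> i. c i * a $ i) ` S \<in> lmeasurable"
        by (simp add: \<open>S \<in> lmeasurable\<close> measurable_stretch)
      show "?Q (\<lambda>a. \<chi> i. c i * a $ i) S"
        by (simp add: measure_stretch [OF \<open>S \<in> lmeasurable\<close>, of c] axis_def matrix_def det_diagonal)
    qed
  next
    fix m :: "'n" and n :: "'n" and S :: "(real, 'n) vec set"
    assume "m \<noteq> n" and "S \<in> lmeasurable"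
    let ?h = "\<lambda>v::(real, 'n) vec. \<chi> i. v $ Transposition.transpose m n i"
    have lin: "linear ?h"
      by (rule linearI) (simp_all add: plus_vec_def scaleR_vec_def)
    have meq: "measure lebesgue ((\<lambda>v::(real, 'n) vec. \<chi> i. v $ Transposition.transpose m n i) ` cbox a b)
             = measure lebesgue (cbox a b)" for a b
    proof (cases "cbox a b = {}")
      case True then show ?thesis
        by simp
    next
      case False
      then have him: "?h ` (cbox a b) \<noteq> {}"
        by blast
      have eq: "?h ` (cbox a b) = cbox (?h a) (?h b)"
        by (auto simp: image_iff lambda_swap_Galois mem_box_cart) (metis transpose_involutory)+
      show ?thesis
        using him prod.permute [OF permutes_swap_id, where S=UNIV and g="\<lambda>i. (b - a)$i", symmetric]
        by (simp add: eq content_cbox_cart False)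
    qed
    have "(\<chi> i j. if Transposition.transpose m n i = j then 1 else 0) = (\<chi> i j. if j = Transposition.transpose m n i then 1 else (0::real))"
      by (auto intro!: Cart_lambda_cong)
    then have "matrix ?h = transpose(\<chi> i j. mat 1 $ i $ Transposition.transpose m n j)"
      by (auto simp: matrix_eq transpose_def axis_def mat_def matrix_def)
    then have 1: "\<bar>det (matrix ?h)\<bar> = 1"
      by (simp add: det_permute_columns permutes_swap_id sign_swap_id abs_mult)
    show "?h ` S \<in> lmeasurable \<and> ?Q ?h S"
      using measure_linear_sufficient [OF lin \<open>S \<in> lmeasurable\<close>] meq 1 by force
  next
    fix m n :: "'n" and S :: "(real, 'n) vec set"
    assume "m \<noteq> n" and "S \<in> lmeasurable"
    let ?h = "\<lambda>v::(real, 'n) vec. \<chi> i. if i = m then v $ m + v $ n else v $ i"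
    have lin: "linear ?h"
      by (rule linearI) (auto simp: algebra_simps plus_vec_def scaleR_vec_def vec_eq_iff)
    have 1: "det(matrix ?h) = 1"
      using det_shear_matrix[OF \<open>m \<noteq> n\<close>] .
    have meq: "measure lebesgue (?h ` (cbox a b)) = measure lebesgue (cbox a b)" for a b
    proof (cases "cbox a b = {}")
      case True then show ?thesis by simp
    next
      case False
      then have ne: "(+) (\<chi> i. if i = n then - a $ n else 0) ` cbox a b \<noteq> {}"
        by auto
      let ?v = "\<chi> i. if i = n then - a $ n else 0"
      have "?h ` cbox a b
            = (+) (\<chi> i. if i = m \<or> i = n then a $ n else 0) ` ?h ` (+) ?v ` (cbox a b)"
        using \<open>m \<noteq> n\<close> unfolding image_comp o_def by (force simp: vec_eq_iff)
      then have "measure lebesgue (?h ` (cbox a b))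
               = measure lebesgue ((\<lambda>v. \<chi> i. if i = m then v $ m + v $ n else v $ i) `
                                   (+) ?v ` cbox a b)"
        by (rule ssubst) (rule measure_translation)
      also have "\<dots> = measure lebesgue ((\<lambda>v. \<chi> i. if i = m then v $ m + v $ n else v $ i) ` cbox (?v +a) (?v + b))"
        by (metis (no_types, lifting) cbox_translation)
      also have "\<dots> = measure lebesgue ((+) ?v ` cbox a b)"
        apply (subst measure_shear_interval)
        using \<open>m \<noteq> n\<close> ne apply auto
        apply (simp add: cbox_translation)
        by (metis cbox_borel cbox_translation measure_completion sets_lborel)
      also have "\<dots> = measure lebesgue (cbox a b)"
        by (rule measure_translation)
        finally show ?thesis .
      qed
    show "?h ` S \<in> lmeasurable \<and> ?Q ?h S"
      using measure_linear_sufficient [OF lin \<open>S \<in> lmeasurable\<close>] meq 1 by force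
  qed
  with assms show "(f ` S) \<in> lmeasurable" "?Q f S"
    by metis+
qed



lemma matrix_inv_right:
  fixes L :: "'a::semiring_1^'n^'m"
  assumes "invertible L" shows "L ** matrix_inv L = mat 1"
  using someI_ex[OF assms[unfolded invertible_def]] unfolding matrix_inv_def by blast

lemma matrix_inv_left:
  fixes L :: "'a::semiring_1^'n^'m"
  assumes "invertible L" shows "matrix_inv L ** L = mat 1"
  using someI_ex[OF assms[unfolded invertible_def]] unfolding matrix_inv_def by blast

lemma invertible_det_nz': "invertible (L::real^'n^'n) \<Longrightarrow> det L \<noteq> 0"
  using invertible_det_nz by blast

lemma det_matrix_inv':
  fixes L :: "real^'n^'n"
  assumes "invertible L"
  shows "det (matrix_inv L) = inverse (det L)"
proof -
  have "L ** matrix_inv L = mat 1" using assms by (simp add: matrix_inv_right)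
  then have "det L * det (matrix_inv L) = 1" by (metis det_I det_mul)
  then show ?thesis by (metis inverse_unique)
qed

lemma lborel_linear:
  fixes L :: "real^'n^'n"
  assumes L: "invertible L"
  shows "lborel = density (distr lborel borel (\<lambda>x. L *v x)) (\<lambda>_. ennreal \<bar>det L\<bar>)"
proof (rule lborel_eqI)
  fix l u :: "real^'n" assume le: "\<And>b. b \<in> Basis \<Longrightarrow> l \<bullet> b \<le> u \<bullet> b"
  let ?T = "\<lambda>x. L *v x"
  let ?Ti = "\<lambda>x. matrix_inv L *v x"
  have [measurable]: "?T \<in> borel \<rightarrow>\<^sub>M borel"
    by (intro borel_measurable_continuous_onI linear_continuous_on matrix_vector_mul_bounded_linear)
  have pre: "?T -` box l u = ?Ti ` box l u"
  proof safe
    fix x assume "L *v x \<in> box l u"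
    moreover have "x = matrix_inv L *v (L *v x)"
      using L by (simp add: matrix_vector_mul_assoc matrix_inv_left)
    ultimately show "x \<in> ?Ti ` box l u" by blast
  next
    fix y assume "y \<in> box l u"
    then show "matrix_inv L *v y \<in> ?T -` box l u"
      using L by (simp add: matrix_vector_mul_assoc matrix_inv_right)
  qed
  have lin: "linear ?Ti" by (simp add: matrix_vector_mul_linear)
  have bl: "box l u \<in> lmeasurable" by simp
  have im: "?Ti ` box l u \<in> lmeasurable" by (rule measurable_linear_image'[OF lin bl])
  have meas: "measure lebesgue (?Ti ` box l u) = \<bar>det (matrix_inv L)\<bar> * measure lebesgue (box l u)"
    using measure_linear_image'[OF lin bl] by (simp add: matrix_of_matrix_vector_mul)
  have "?T -` box l u \<in> sets borel"
    using measurable_sets[of ?T borel borel "box l u"] by simp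
  then have "emeasure lborel (?T -` box l u) = emeasure lebesgue (?T -` box l u)"
    by (simp add: emeasure_completion)
  also have "\<dots> = ennreal (measure lebesgue (?Ti ` box l u))"
    using im pre by (simp add: emeasure_eq_measure2)
  also have "\<dots> = ennreal (inverse \<bar>det L\<bar> * (\<Prod>b\<in>Basis. (u - l) \<bullet> b))"
    using meas le L by (simp add: det_matrix_inv' measure_lborel_box_eq abs_inverse)
  finally have e: "emeasure lborel (?T -` box l u) = ennreal (inverse \<bar>det L\<bar> * (\<Prod>b\<in>Basis. (u - l) \<bullet> b))" .
  have dz: "det L \<noteq> 0" using L invertible_det_nz by blast
  have "emeasure (density (distr lborel borel ?T) (\<lambda>_. ennreal \<bar>det L\<bar>)) (box l u)
      = ennreal \<bar>det L\<bar> * emeasure lborel (?T -` box l u)"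
    by (simp add: emeasure_density emeasure_distr nn_integral_cmult_indicator)
  also have "\<dots> = ennreal (\<Prod>b\<in>Basis. (u - l) \<bullet> b)"
    using dz le by (simp add: e ennreal_mult'[symmetric] prod_nonneg mult.assoc[symmetric])
  finally show "emeasure (density (distr lborel borel ?T) (\<lambda>_. ennreal \<bar>det L\<bar>)) (box l u) = (\<Prod>b\<in>Basis. (u - l) \<bullet> b)"
    by (simp add: prod_nonneg le inner_diff_left)
qed simp

lemma nn_integral_lborel_linear:
  fixes L :: "real^'n^'n" and f :: "real^'n \<Rightarrow> ennreal"
  assumes L: "invertible L" and f[measurable]: "f \<in> borel_measurable borel"
  shows "(\<integral>\<^sup>+x. f x \<partial>lborel) = ennreal \<bar>det L\<bar> * (\<integral>\<^sup>+x. f (L *v x) \<partial>lborel)"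
proof -
  have [measurable]: "(\<lambda>x. L *v x) \<in> borel \<rightarrow>\<^sub>M borel"
    by (intro borel_measurable_continuous_onI linear_continuous_on matrix_vector_mul_bounded_linear)
  have "(\<integral>\<^sup>+x. f x \<partial>lborel) = (\<integral>\<^sup>+x. f x \<partial>density (distr lborel borel (\<lambda>x. L *v x)) (\<lambda>_. ennreal \<bar>det L\<bar>))"
    using lborel_linear[OF L] by simp
  also have "\<dots> = (\<integral>\<^sup>+x. ennreal \<bar>det L\<bar> * f x \<partial>distr lborel borel (\<lambda>x. L *v x))"
    by (simp add: nn_integral_density)
  also have "\<dots> = (\<integral>\<^sup>+x. ennreal \<bar>det L\<bar> * f (L *v x) \<partial>lborel)"
    by (simp add: nn_integral_distr)
  also have "\<dots> = ennreal \<bar>det L\<bar> * (\<integral>\<^sup>+x. f (L *v x) \<partial>lborel)"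
    by (simp add: nn_integral_cmult)
  finally show ?thesis .
qed


lemma gauss1: "(\<integral>\<^sup>+t. ennreal (exp (- t\<^sup>2 / 2)) \<partial>lborel) = ennreal (sqrt (2 * pi))"
proof -
  interpret prob_space "density lborel (normal_density 0 1)"
    by (rule prob_space_normal_density) simp
  have "(\<integral>\<^sup>+t. ennreal (normal_density 0 1 t) \<partial>lborel) = 1"
    using emeasure_space_1 by (simp add: emeasure_density)
  moreover have "ennreal (normal_density 0 1 t) = ennreal (1 / sqrt (2 * pi)) * ennreal (exp (- t\<^sup>2 / 2))" for t
    unfolding std_normal_density_def by (rule ennreal_mult) auto
  ultimately have "(\<integral>\<^sup>+t. ennreal (1 / sqrt (2 * pi)) * ennreal (exp (- t\<^sup>2 / 2)) \<partial>lborel) = 1"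
    by simp
  then have "ennreal (1 / sqrt (2 * pi)) * (\<integral>\<^sup>+t. ennreal (exp (- t\<^sup>2 / 2)) \<partial>lborel) = 1"
    by (subst (asm) nn_integral_cmult) auto
  then have "ennreal (sqrt (2 * pi)) * (ennreal (1 / sqrt (2 * pi)) * (\<integral>\<^sup>+t. ennreal (exp (- t\<^sup>2 / 2)) \<partial>lborel)) = ennreal (sqrt (2 * pi))"
    by simp
  then show ?thesis
    by (simp add: mult.assoc[symmetric] ennreal_mult[symmetric])
qed

lemma gauss_std:
  "(\<integral>\<^sup>+x. ennreal (exp (- (x \<bullet> x) / 2)) \<partial>(lborel :: (real^'n) measure)) = ennreal (sqrt (2 * pi) ^ CARD('n))"
proof -
  interpret P: product_sigma_finite "\<lambda>_::real^'n. (lborel :: real measure)"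
    by standard
  have eq: "(\<Sum>b\<in>Basis. f b *\<^sub>R b) \<bullet> (\<Sum>b\<in>Basis. f b *\<^sub>R b) = (\<Sum>b\<in>(Basis::(real^'n) set). (f b)\<^sup>2)" for f :: "real^'n \<Rightarrow> real"
    by (simp add: inner_sum_left inner_sum_right inner_Basis power2_eq_square if_distrib sum.delta cong: if_cong)
  have "(\<integral>\<^sup>+x. ennreal (exp (- (x \<bullet> x) / 2)) \<partial>(lborel :: (real^'n) measure))
      = (\<integral>\<^sup>+f. ennreal (exp (- ((\<Sum>b\<in>Basis. f b *\<^sub>R b) \<bullet> (\<Sum>b\<in>Basis. f b *\<^sub>R b)) / 2)) \<partial>(\<Pi>\<^sub>M b\<in>(Basis::(real^'n) set). lborel))"
    by (subst lborel_eq) (simp add: nn_integral_distr)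
  also have "\<dots> = (\<integral>\<^sup>+f. (\<Prod>b\<in>(Basis::(real^'n) set). ennreal (exp (- (f b)\<^sup>2 / 2))) \<partial>(\<Pi>\<^sub>M b\<in>(Basis::(real^'n) set). lborel))"
  proof (rule nn_integral_cong)
    fix f :: "real^'n \<Rightarrow> real"
    have "exp (- (\<Sum>b\<in>(Basis::(real^'n) set). (f b)\<^sup>2) / 2) = (\<Prod>b\<in>(Basis::(real^'n) set). exp (- (f b)\<^sup>2 / 2))"
      by (simp add: exp_sum[symmetric] sum_divide_distrib sum_negf)
    then show "ennreal (exp (- ((\<Sum>b\<in>Basis. f b *\<^sub>R b) \<bullet> (\<Sum>b\<in>Basis. f b *\<^sub>R b)) / 2)) = (\<Prod>b\<in>(Basis::(real^'n) set). ennreal (exp (- (f b)\<^sup>2 / 2)))"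
      by (simp add: eq prod_ennreal)
  qed
  also have "\<dots> = (\<Prod>b\<in>(Basis::(real^'n) set). \<integral>\<^sup>+t. ennreal (exp (- t\<^sup>2 / 2)) \<partial>lborel)"
    by (rule P.product_nn_integral_prod) auto
  also have "\<dots> = ennreal (sqrt (2 * pi) ^ CARD('n))"
    by (simp only: gauss1 prod_constant) (simp add: ennreal_power)
  finally show ?thesis .
qed


lemma qsym:
  fixes A :: "real^'n^'n"
  assumes "transpose A = A"
  shows "x \<bullet> (A *v y) = y \<bullet> (A *v x)"
proof -
  have "x \<bullet> (A *v y) = (x v* A) \<bullet> y" by (simp add: dot_lmul_matrix)
  also have "x v* A = transpose A *v x" by simp
  finally show ?thesis using assms by (simp add: inner_commute)
qed

lemma A_gram_schmidt:
  fixes A :: "real^'n^'n"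
  assumes A: "sym_pos_def_mat A" and S: "finite S"
  shows "\<exists>B. finite B \<and> 0 \<notin> B \<and> S \<subseteq> span B \<and> (\<forall>x\<in>B. \<forall>y\<in>B. x \<noteq> y \<longrightarrow> x \<bullet> (A *v y) = 0)"
  using S
proof (induction S rule: finite_induct)
  case empty
  show ?case by (rule exI[of _ "{}"]) auto
next
  case (insert a S)
  from insert.IH obtain B where B: "finite B" "0 \<notin> B" "S \<subseteq> span B"
    and orth: "\<forall>x\<in>B. \<forall>y\<in>B. x \<noteq> y \<longrightarrow> x \<bullet> (A *v y) = 0" by blast
  have sym: "transpose A = A" and pd: "\<And>x. x \<noteq> 0 \<Longrightarrow> x \<bullet> (A *v x) > 0"
    using A by (auto simp: sym_pos_def_mat_def)
  define s where "s = (\<Sum>b\<in>B. ((b \<bullet> (A *v a)) / (b \<bullet> (A *v b))) *\<^sub>R b)"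
  define a' where "a' = a - s"
  have s_span: "s \<in> span B" unfolding s_def
    by (intro span_sum span_scale span_base) auto
  have a_eq: "a = a' + s" by (simp add: a'_def)
  have orth': "b \<bullet> (A *v a') = 0" if b: "b \<in> B" for b
  proof -
    have bpos: "b \<bullet> (A *v b) > 0" using pd[of b] b B(2) by auto
    have "b \<bullet> (A *v s) = (\<Sum>c\<in>B. ((c \<bullet> (A *v a)) / (c \<bullet> (A *v c))) * (b \<bullet> (A *v c)))"
      unfolding s_def by (simp add: vec.sum matrix_vector_mult_scaleR inner_sum_right)
    also have "\<dots> = ((b \<bullet> (A *v a)) / (b \<bullet> (A *v b))) * (b \<bullet> (A *v b))"
    proof -
      have ob: "\<And>c. c \<in> B - {b} \<Longrightarrow> b \<bullet> (A *v c) = 0" by (rule orth[rule_format, OF b]) auto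
      show ?thesis by (subst sum.remove[OF B(1) b]) (simp add: ob)
    qed
    also have "\<dots> = b \<bullet> (A *v a)" using bpos by simp
    finally show ?thesis by (simp add: a'_def matrix_vector_mult_diff_distrib inner_diff_right)
  qed
  show ?case
  proof (cases "a' = 0")
    case True
    then have "a \<in> span B" using a_eq s_span by simp
    then show ?thesis using B orth by (intro exI[of _ B]) auto
  next
    case False
    have "a' \<in> span (insert a' B)" by (simp add: span_base)
    moreover have "s \<in> span (insert a' B)" using s_span span_mono[of B "insert a' B"] by auto
    ultimately have "a \<in> span (insert a' B)" using a_eq span_add by metis
    moreover have "S \<subseteq> span (insert a' B)" using B(3) span_mono[of B "insert a' B"] by auto
    moreover have "\<forall>x\<in>insert a' B. \<forall>y\<in>insert a' B. x \<noteq> y \<longrightarrow> x \<bullet> (A *v y) = 0"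
    proof (intro ballI impI)
      fix x y assume x: "x \<in> insert a' B" and y: "y \<in> insert a' B" and xy: "x \<noteq> y"
      show "x \<bullet> (A *v y) = 0"
      proof (cases "x = a'")
        case True
        then have "y \<in> B" using y xy by auto
        then show ?thesis using True orth' qsym[OF sym, of a' y] by simp
      next
        case False
        then have xB: "x \<in> B" using x by auto
        show ?thesis
        proof (cases "y = a'")
          case True then show ?thesis using orth' xB by simp
        next
          case False then show ?thesis using orth xB y xy by auto
        qed
      qed
    qed
    ultimately show ?thesis using B False by (intro exI[of _ "insert a' B"]) auto
  qed
qed

lemma tmul_col: "(transpose X ** (Y::real^'n^'m)) $ i $ j = column i X \<bullet> column j Y"
  for X :: "real^'k^'m"
  by (simp add: matrix_matrix_mult_def transpose_def column_def inner_vec_def mult.commute)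

lemma col_mul: "column j (A ** L) = A *v column j (L::real^'n^'m)"
  for A :: "real^'m^'k"
  by (simp add: column_def matrix_matrix_mult_def matrix_vector_mult_def vec_eq_iff)

lemma A_orthonormal_matrix:
  fixes A :: "real^'n^'n"
  assumes A: "sym_pos_def_mat A"
  shows "\<exists>L::real^'n^'n. transpose L ** A ** L = mat 1"
proof -
  have sym: "transpose A = A" and pd: "\<And>x. x \<noteq> 0 \<Longrightarrow> x \<bullet> (A *v x) > 0"
    using A by (auto simp: sym_pos_def_mat_def)
  obtain B where B: "finite B" "0 \<notin> B" "Basis \<subseteq> span B"
    and orth: "\<forall>x\<in>B. \<forall>y\<in>B. x \<noteq> y \<longrightarrow> x \<bullet> (A *v y) = 0"
    using A_gram_schmidt[OF A, of "Basis :: (real^'n) set"] by auto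
  have "span B = UNIV" using span_Basis span_mono[OF B(3)] span_span[of B] by auto
  then have "dim (UNIV :: (real^'n) set) \<le> card B"
    using dim_le_card[of UNIV B] B(1) by auto
  then have "CARD('n) \<le> card B" by simp
  then obtain g where g: "g ` (UNIV::'n set) \<subseteq> B" "inj g"
    using card_le_inj[of "UNIV::'n set" B] B(1) by auto
  define c where "c = (\<lambda>j. (1 / sqrt (g j \<bullet> (A *v g j))) *\<^sub>R g j)"
  define L :: "real^'n^'n" where "L = (\<chi> i j. c j $ i)"
  have colL: "column j L = c j" for j
    by (simp add: column_def L_def vec_eq_iff)
  have gpos: "g j \<bullet> (A *v g j) > 0" for j
  proof -
    have "g j \<in> B" using g(1) by auto
    then have "g j \<noteq> 0" using B(2) by metis
    then show ?thesis using pd[of "g j"] by linarith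
  qed
  have cc: "c i \<bullet> (A *v c j) = (if i = j then 1 else 0)" for i j
  proof (cases "i = j")
    case True
    then show ?thesis using gpos[of j]
      by (simp add: c_def matrix_vector_mult_scaleR real_sqrt_mult[symmetric])
  next
    case False
    then have "g i \<noteq> g j" using g(2) by (auto dest: injD)
    moreover have "g i \<in> B" "g j \<in> B" using g(1) by auto
    ultimately have "g i \<bullet> (A *v g j) = 0" using orth by metis
    then show ?thesis using False by (simp add: c_def matrix_vector_mult_scaleR)
  qed
  have "transpose L ** A ** L = (\<chi> i j. column i L \<bullet> (A *v column j L))"
    by (simp only: matrix_mul_assoc[symmetric]) (simp add: vec_eq_iff tmul_col col_mul)
  also have "\<dots> = mat 1"
    by (simp add: colL cc vec_eq_iff mat_def)
  finally show ?thesis by blast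
qed


lemma nn_integral_affine_vec:
  fixes f :: "real^'n \<Rightarrow> ennreal"
  assumes c: "c \<noteq> 0" and f[measurable]: "f \<in> borel_measurable borel"
  shows "(\<integral>\<^sup>+x. f x \<partial>lborel) = ennreal (\<bar>c\<bar> ^ CARD('n)) * (\<integral>\<^sup>+x. f (t + c *\<^sub>R x) \<partial>lborel)"
proof -
  have "(\<integral>\<^sup>+x. f x \<partial>lborel) = (\<integral>\<^sup>+x. f x \<partial>density (distr lborel borel (\<lambda>x. t + c *\<^sub>R x)) (\<lambda>x. ennreal (\<bar>c\<bar> ^ DIM(real^'n))))"
    using lborel_affine[OF c, of t] by simp
  also have "\<dots> = (\<integral>\<^sup>+x. ennreal (\<bar>c\<bar> ^ CARD('n)) * f (t + c *\<^sub>R x) \<partial>lborel)"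
    by (simp add: nn_integral_density nn_integral_distr)
  also have "\<dots> = ennreal (\<bar>c\<bar> ^ CARD('n)) * (\<integral>\<^sup>+x. f (t + c *\<^sub>R x) \<partial>lborel)"
    by (simp add: nn_integral_cmult)
  finally show ?thesis .
qed

lemma mvmul_measurable[measurable]: "(\<lambda>x. (A::real^'n^'m) *v x) \<in> borel_measurable borel"
  by (intro borel_measurable_continuous_onI linear_continuous_on matrix_vector_mul_bounded_linear)

lemma quad_change:
  fixes L A :: "real^'n^'n"
  shows "(L *v y) \<bullet> (A *v (L *v y)) = y \<bullet> ((transpose L ** A ** L) *v y)"
proof -
  have h: "(L *v y) \<bullet> w = y \<bullet> (transpose L *v w)" for w
    by (metis dot_lmul_matrix inner_commute transpose_matrix_vector)
  have "(L *v y) \<bullet> (A *v (L *v y)) = y \<bullet> (transpose L *v (A *v (L *v y)))" by (rule h)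
  also have "transpose L *v (A *v (L *v y)) = (transpose L ** A ** L) *v y"
    by (simp only: matrix_vector_mul_assoc matrix_mul_assoc)
  finally show ?thesis .
qed

lemma gauss_general:
  fixes A :: "real^'n^'n"
  assumes A: "sym_pos_def_mat A"
  shows "det A > 0"
    and "(\<integral>\<^sup>+x. ennreal (exp (- (x \<bullet> (A *v x)) / 2)) \<partial>lborel) = ennreal (sqrt (2 * pi) ^ CARD('n) / sqrt (det A))"
proof -
  obtain L :: "real^'n^'n" where L: "transpose L ** A ** L = mat 1"
    using A_orthonormal_matrix[OF A] by blast
  have "det (transpose L ** A ** L) = 1" using L by simp
  then have dL: "det L * det L * det A = 1" by (simp add: det_mul mult_ac)
  then have dLnz: "det L \<noteq> 0" by auto
  have "det L * det L > 0" using dLnz by (simp add: zero_less_mult_iff linorder_neq_iff disj_commute)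
  then show dA: "det A > 0" using dL zero_less_mult_pos[of "det L * det L" "det A"] by simp
  have inv: "invertible L" using dLnz by (simp add: invertible_det_nz)
  have absL: "\<bar>det L\<bar> = 1 / sqrt (det A)"
  proof -
    have "\<bar>det L\<bar> ^ 2 = 1 / det A" using dL dA by (simp add: power2_eq_square field_simps)
    then have "\<bar>det L\<bar> = sqrt (1 / det A)" by (metis abs_ge_zero real_sqrt_abs real_sqrt_pow2 power2_abs)
    then show ?thesis by (simp add: real_sqrt_divide)
  qed
  have "(\<integral>\<^sup>+x. ennreal (exp (- (x \<bullet> (A *v x)) / 2)) \<partial>lborel)
      = ennreal \<bar>det L\<bar> * (\<integral>\<^sup>+y. ennreal (exp (- ((L *v y) \<bullet> (A *v (L *v y))) / 2)) \<partial>lborel)"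
    by (rule nn_integral_lborel_linear[OF inv]) simp
  also have "(\<lambda>y. ennreal (exp (- ((L *v y) \<bullet> (A *v (L *v y))) / 2))) = (\<lambda>y. ennreal (exp (- (y \<bullet> y) / 2)))"
    by (simp add: quad_change L)
  also have "ennreal \<bar>det L\<bar> * (\<integral>\<^sup>+y. ennreal (exp (- (y \<bullet> y) / 2)) \<partial>(lborel :: (real^'n) measure)) = ennreal (sqrt (2 * pi) ^ CARD('n) / sqrt (det A))"
  proof (subst gauss_std)
    have "ennreal (1 / sqrt (det A)) * ennreal (sqrt (2 * pi) ^ CARD('n)) = ennreal (1 / sqrt (det A) * sqrt (2 * pi) ^ CARD('n))"
      by (rule ennreal_mult[symmetric]) (use dA in auto)
    then show "ennreal \<bar>det L\<bar> * ennreal (sqrt (2 * pi) ^ CARD('n)) = ennreal (sqrt (2 * pi) ^ CARD('n) / sqrt (det A))"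
      by (simp add: absL)
  qed
  finally show "(\<integral>\<^sup>+x. ennreal (exp (- (x \<bullet> (A *v x)) / 2)) \<partial>lborel) = ennreal (sqrt (2 * pi) ^ CARD('n) / sqrt (det A))" .
qed

definition gq :: "real^'n^'n \<Rightarrow> real^'n \<Rightarrow> real \<Rightarrow> real^'n \<Rightarrow> real" where
  "gq A m s x = exp (- ((x - m) \<bullet> (A *v (x - m))) / (2 * s))"

lemma gq_measurable[measurable]: "gq A m s \<in> borel_measurable borel"
proof -
  have "continuous_on UNIV (\<lambda>x. A *v x)"
    by (intro linear_continuous_on matrix_vector_mul_bounded_linear)
  then have "continuous_on UNIV (\<lambda>x. A *v (x - m))"
    by (rule continuous_on_compose2[of UNIV]) (auto intro!: continuous_intros)
  then show ?thesis
    unfolding gq_def[abs_def] divide_inverse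
    by (intro borel_measurable_continuous_onI continuous_intros)
qed

lemma gauss_shift_scale:
  fixes A :: "real^'n^'n"
  assumes A: "sym_pos_def_mat A" and s: "s > 0"
  shows "(\<integral>\<^sup>+x. ennreal (gq A m s x) \<partial>lborel) = ennreal (sqrt (2 * pi) ^ CARD('n) * sqrt s ^ CARD('n) / sqrt (det A))"
proof -
  have c: "sqrt s \<noteq> 0" using s by simp
  have "(\<integral>\<^sup>+x. ennreal (gq A m s x) \<partial>lborel) = ennreal (\<bar>sqrt s\<bar> ^ CARD('n)) * (\<integral>\<^sup>+x. ennreal (gq A m s (m + sqrt s *\<^sub>R x)) \<partial>lborel)"
    by (rule nn_integral_affine_vec[OF c]) simp
  also have "(\<lambda>x. ennreal (gq A m s (m + sqrt s *\<^sub>R x))) = (\<lambda>x. ennreal (exp (- (x \<bullet> (A *v x)) / 2)))"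
  proof -
    have h: "\<And>q. sqrt s * (sqrt s * q) / (2 * s) = q / 2" using s by (simp add: mult.assoc[symmetric])
    show ?thesis by (simp add: gq_def matrix_vector_mult_scaleR h)
  qed
  also have "ennreal (\<bar>sqrt s\<bar> ^ CARD('n)) * (\<integral>\<^sup>+x. ennreal (exp (- (x \<bullet> (A *v x)) / 2)) \<partial>lborel)
     = ennreal (sqrt (2 * pi) ^ CARD('n) * sqrt s ^ CARD('n) / sqrt (det A))"
    using gauss_general(2)[OF A] s by (simp add: ennreal_mult'[symmetric] mult_ac)
  finally show ?thesis .
qed


lemma q_add:
  fixes A :: "real^'n^'n"
  assumes "transpose A = A"
  shows "(x + y) \<bullet> (A *v (x + y)) = x \<bullet> (A *v x) + 2 * (x \<bullet> (A *v y)) + y \<bullet> (A *v y)"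
  using qsym[OF assms, of y x]
  by (simp add: matrix_vector_right_distrib inner_add_left inner_add_right)

lemma q_diff:
  fixes A :: "real^'n^'n"
  assumes "transpose A = A"
  shows "(x - y) \<bullet> (A *v (x - y)) = x \<bullet> (A *v x) - 2 * (x \<bullet> (A *v y)) + y \<bullet> (A *v y)"
  using qsym[OF assms, of y x]
  by (simp add: matrix_vector_mult_diff_distrib inner_diff_left inner_diff_right)

lemma q_scale:
  fixes A :: "real^'n^'n"
  shows "(c *\<^sub>R x) \<bullet> (A *v (c *\<^sub>R y)) = c * c * (x \<bullet> (A *v y))"
  by (simp add: matrix_vector_mult_scaleR)

lemma q_scale_left:
  fixes A :: "real^'n^'n"
  shows "(c *\<^sub>R x) \<bullet> (A *v y) = c * (x \<bullet> (A *v y))"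
  by simp

lemma q_scale_right:
  fixes A :: "real^'n^'n"
  shows "x \<bullet> (A *v (c *\<^sub>R y)) = c * (x \<bullet> (A *v y))"
  by (simp add: matrix_vector_mult_scaleR)

locale gsig =
  fixes Sigma :: "real^'n^'n"
  assumes pd: "sym_pos_def_mat Sigma"
begin

abbreviation "A \<equiv> matrix_inv Sigma"

lemma Sigma_sym: "transpose Sigma = Sigma"
  using pd by (simp add: sym_pos_def_mat_def)

lemma Sigma_invertible: "invertible Sigma"
proof -
  have "inj ((*v) Sigma)"
  proof (rule injI)
    fix x y assume "Sigma *v x = Sigma *v y"
    then have "Sigma *v (x - y) = 0" by (simp add: matrix_vector_mult_diff_distrib)
    then have "(x - y) \<bullet> (Sigma *v (x - y)) = 0" by simp
    then have "x - y = 0" using pd unfolding sym_pos_def_mat_def by (metis less_irrefl)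
    then show "x = y" by simp
  qed
  then have "det (matrix ((*v) Sigma)) \<noteq> 0"
    using det_nz_iff_inj[OF matrix_vector_mul_linear] by blast
  then show ?thesis by (simp add: matrix_of_matrix_vector_mul invertible_det_nz)
qed

lemma SA: "Sigma ** A = mat 1" using Sigma_invertible matrix_inv_right by blast
lemma AS: "A ** Sigma = mat 1" using Sigma_invertible matrix_inv_left by blast

lemma A_sym: "transpose A = A"
proof -
  have "transpose A ** Sigma = mat 1"
    using arg_cong[OF SA, of transpose] Sigma_sym by (simp add: matrix_transpose_mul)
  then have "transpose A = transpose A ** (Sigma ** A)" by (simp add: SA)
  also have "\<dots> = (transpose A ** Sigma) ** A" by (simp add: matrix_mul_assoc)
  also have "\<dots> = A" using \<open>transpose A ** Sigma = mat 1\<close> by simp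
  finally show ?thesis .
qed

lemma A_pd: "sym_pos_def_mat A"
  unfolding sym_pos_def_mat_def
proof (intro conjI allI impI)
  show "transpose A = A" by (rule A_sym)
  fix x :: "real^'n" assume x: "x \<noteq> 0"
  define y where "y = A *v x"
  have xy: "x = Sigma *v y" by (simp add: y_def matrix_vector_mul_assoc SA)
  have "y \<noteq> 0" using x xy by auto
  then have "y \<bullet> (Sigma *v y) > 0" using pd by (simp add: sym_pos_def_mat_def)
  moreover have "x \<bullet> (A *v x) = y \<bullet> (Sigma *v y)"
    using xy qsym[OF Sigma_sym, of y y] by (simp add: y_def inner_commute)
  ultimately show "x \<bullet> (A *v x) > 0" by simp
qed

lemma detA_pos: "det A > 0" using gauss_general(1)[OF A_pd] .

lemma det_SA: "det Sigma * det A = 1"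
  using arg_cong[OF SA, of det] by (simp add: det_mul)

lemma detS_pos: "det Sigma > 0"
  using det_SA detA_pos zero_less_mult_pos2[of "det Sigma" "det A"] by simp

lemma detA_eq: "det A = 1 / det Sigma"
  using det_SA detS_pos by (simp add: field_simps)

definition Z :: real where "Z = sqrt (2 * pi) ^ CARD('n) * sqrt (det Sigma)"

lemma Z_pos: "Z > 0" using detS_pos by (simp add: Z_def)

definition gd :: "real^'n \<Rightarrow> real \<Rightarrow> real^'n \<Rightarrow> real" where
  "gd m s x = gq A m s x / (Z * sqrt s ^ CARD('n))"

lemma gd_measurable[measurable]: "gd m s \<in> borel_measurable borel"
  unfolding gd_def[abs_def] by measurable

lemma gd_pos: "s > 0 \<Longrightarrow> gd m s x > 0"
  using Z_pos by (simp add: gd_def gq_def)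

lemma gd_nonneg: "s > 0 \<Longrightarrow> gd m s x \<ge> 0"
  using gd_pos[of s m x] by simp

lemma gd_int: assumes s: "s > 0" shows "(\<integral>\<^sup>+x. ennreal (gd m s x) \<partial>lborel) = 1"
proof -
  have "(\<integral>\<^sup>+x. ennreal (gd m s x) \<partial>lborel) = (\<integral>\<^sup>+x. ennreal (1 / (Z * sqrt s ^ CARD('n))) * ennreal (gq A m s x) \<partial>lborel)"
    using Z_pos s by (intro nn_integral_cong) (simp add: gd_def ennreal_mult[symmetric] gq_def)
  also have "\<dots> = ennreal (1 / (Z * sqrt s ^ CARD('n))) * (\<integral>\<^sup>+x. ennreal (gq A m s x) \<partial>lborel)"
    by (simp add: nn_integral_cmult)
  also have "\<dots> = ennreal (1 / (Z * sqrt s ^ CARD('n))) * ennreal (sqrt (2 * pi) ^ CARD('n) * sqrt s ^ CARD('n) / sqrt (det A))"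
    by (simp add: gauss_shift_scale[OF A_pd s])
  also have "\<dots> = ennreal (1 / (Z * sqrt s ^ CARD('n)) * (sqrt (2 * pi) ^ CARD('n) * sqrt s ^ CARD('n) / sqrt (det A)))"
    using Z_pos s detA_pos by (intro ennreal_mult[symmetric]) auto
  also have "1 / (Z * sqrt s ^ CARD('n)) * (sqrt (2 * pi) ^ CARD('n) * sqrt s ^ CARD('n) / sqrt (det A)) = 1"
    using s detS_pos by (simp add: Z_def detA_eq real_sqrt_divide)
  finally show ?thesis by simp
qed

lemma mvn_eq: "mvn_density mu Sigma = gd mu 1"
proof
  fix x
  have "sqrt ((2 * pi) ^ CARD('n) * det Sigma) = Z"
    by (simp add: Z_def real_sqrt_mult real_sqrt_power power_mult_distrib)
  then show "mvn_density mu Sigma x = gd mu 1 x"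
    by (simp add: mvn_density_def gd_def gq_def)
qed

end


context gsig
begin

lemma gd_affine_pt:
  assumes c: "c \<noteq> 0" and s: "s > 0"
  shows "\<bar>c\<bar> ^ CARD('n) * gd (a + c *\<^sub>R m) (c\<^sup>2 * s) (a + c *\<^sub>R x) = gd m s x"
proof -
  have d: "a + c *\<^sub>R x - (a + c *\<^sub>R m) = c *\<^sub>R (x - m)" by (simp add: algebra_simps)
  have q: "- ((c *\<^sub>R (x - m)) \<bullet> (A *v (c *\<^sub>R (x - m)))) / (2 * (c\<^sup>2 * s)) = - ((x - m) \<bullet> (A *v (x - m))) / (2 * s)"
    by (simp only: q_scale) (use c s in \<open>simp add: power2_eq_square field_simps\<close>)
  have sq: "sqrt (c\<^sup>2 * s) ^ CARD('n) = \<bar>c\<bar> ^ CARD('n) * sqrt s ^ CARD('n)"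
    by (simp add: real_sqrt_mult power_mult_distrib)
  have cn: "\<bar>c\<bar> ^ CARD('n) > 0" using c by simp
  show ?thesis
    unfolding gd_def gq_def d q sq using cn Z_pos by (simp add: field_simps)
qed

lemma gd_affine:
  fixes f :: "real^'n \<Rightarrow> ennreal"
  assumes c: "c \<noteq> 0" and s: "s > 0" and f[measurable]: "f \<in> borel_measurable borel"
  shows "(\<integral>\<^sup>+x. f (a + c *\<^sub>R x) * ennreal (gd m s x) \<partial>lborel)
       = (\<integral>\<^sup>+z. f z * ennreal (gd (a + c *\<^sub>R m) (c\<^sup>2 * s) z) \<partial>lborel)"
proof -
  have "(\<integral>\<^sup>+z. f z * ennreal (gd (a + c *\<^sub>R m) (c\<^sup>2 * s) z) \<partial>lborel)
      = ennreal (\<bar>c\<bar> ^ CARD('n)) * (\<integral>\<^sup>+x. f (a + c *\<^sub>R x) * ennreal (gd (a + c *\<^sub>R m) (c\<^sup>2 * s) (a + c *\<^sub>R x)) \<partial>lborel)"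
    by (rule nn_integral_affine_vec[OF c]) simp
  also have "\<dots> = (\<integral>\<^sup>+x. ennreal (\<bar>c\<bar> ^ CARD('n)) * (f (a + c *\<^sub>R x) * ennreal (gd (a + c *\<^sub>R m) (c\<^sup>2 * s) (a + c *\<^sub>R x))) \<partial>lborel)"
    by (rule nn_integral_cmult[symmetric]) simp
  also have "\<dots> = (\<integral>\<^sup>+x. f (a + c *\<^sub>R x) * ennreal (gd m s x) \<partial>lborel)"
  proof (rule nn_integral_cong)
    fix x
    have pos: "c\<^sup>2 * s > 0" using c s by simp
    have "ennreal (\<bar>c\<bar> ^ CARD('n)) * ennreal (gd (a + c *\<^sub>R m) (c\<^sup>2 * s) (a + c *\<^sub>R x))
        = ennreal (\<bar>c\<bar> ^ CARD('n) * gd (a + c *\<^sub>R m) (c\<^sup>2 * s) (a + c *\<^sub>R x))"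
      using gd_nonneg[OF pos] by (intro ennreal_mult[symmetric]) auto
    also have "\<dots> = ennreal (gd m s x)" by (simp add: gd_affine_pt[OF c s])
    finally show "ennreal (\<bar>c\<bar> ^ CARD('n)) * (f (a + c *\<^sub>R x) * ennreal (gd (a + c *\<^sub>R m) (c\<^sup>2 * s) (a + c *\<^sub>R x)))
        = f (a + c *\<^sub>R x) * ennreal (gd m s x)"
      by (metis mult.left_commute)
  qed
  finally show ?thesis ..
qed

lemma gd_conv_pt:
  assumes s1: "s1 > 0" and s2: "s2 > 0"
  shows "gd m1 s1 y * gd m2 s2 (z - y)
       = gd (m1 + m2) (s1 + s2) z * gd (m1 + (s1 / (s1 + s2)) *\<^sub>R (z - m1 - m2)) (s1 * s2 / (s1 + s2)) y"
proof -
  define u where "u = y - m1"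
  define w where "w = z - m1 - m2"
  define t where "t = s1 / (s1 + s2)"
  have e1: "y - m1 = u" by (simp add: u_def)
  have e2: "z - y - m2 = w - u" by (simp add: u_def w_def algebra_simps)
  have e3: "z - (m1 + m2) = w" by (simp add: w_def algebra_simps)
  have e4: "y - (m1 + t *\<^sub>R (z - m1 - m2)) = u - t *\<^sub>R w" by (simp add: u_def w_def algebra_simps)
  define qu where "qu = u \<bullet> (A *v u)"
  define qw where "qw = w \<bullet> (A *v w)"
  define b where "b = u \<bullet> (A *v w)"
  have Q2: "(w - u) \<bullet> (A *v (w - u)) = qw - 2 * b + qu"
    unfolding qw_def b_def qu_def using q_diff[OF A_sym, of w u] qsym[OF A_sym, of w u] by simp
  have Q4: "(u - t *\<^sub>R w) \<bullet> (A *v (u - t *\<^sub>R w)) = qu - 2 * t * b + t * t * qw"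
    unfolding qw_def b_def qu_def using q_diff[OF A_sym, of u "t *\<^sub>R w"]
    by (simp add: q_scale q_scale_right)
  have S: "s1 + s2 > 0" using s1 s2 by simp
  have r: "s1 * s2 / (s1 + s2) > 0" using s1 s2 by simp
  define r where "r = s1 * s2 / (s1 + s2)"
  have rpos: "r > 0" using r by (simp add: r_def)
  have Sne: "s1 + s2 \<noteq> 0" using S by simp
  define Sv where "Sv = s1 + s2"
  have Sv: "Sv > 0" using S by (simp add: Sv_def)
  have tS: "t = s1 / Sv" by (simp add: t_def Sv_def)
  have rS: "r = s1 * s2 / Sv" by (simp add: r_def Sv_def)
  have k1: "1 / (2 * s1) + 1 / (2 * s2) = 1 / (2 * r)"
    unfolding rS using s1 s2 Sv by (simp add: field_simps) (simp add: Sv_def algebra_simps)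
  have k2: "1 / (2 * s2) = 1 / (2 * Sv) + t * t / (2 * r)"
    unfolding rS tS using s1 s2 Sv by (simp add: field_simps) (simp add: Sv_def algebra_simps power2_eq_square)
  have k3: "2 / (2 * s2) = 2 * t / (2 * r)"
    unfolding rS tS using s1 s2 Sv by (simp add: field_simps)
  have L: "- qu / (2 * s1) + - (qw - 2 * b + qu) / (2 * s2)
      = - qu * (1 / (2 * s1) + 1 / (2 * s2)) - qw * (1 / (2 * s2)) + b * (2 / (2 * s2))"
    using s1 s2 by (simp add: field_simps)
  have R: "- qw / (2 * Sv) + - (qu - 2 * t * b + t * t * qw) / (2 * r)
      = - qu * (1 / (2 * r)) - qw * (1 / (2 * Sv) + t * t / (2 * r)) + b * (2 * t / (2 * r))"
    using Sv rpos by (simp add: field_simps)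
  have expo: "- qu / (2 * s1) + - (qw - 2 * b + qu) / (2 * s2)
      = - qw / (2 * (s1 + s2)) + - (qu - 2 * t * b + t * t * qw) / (2 * (s1 * s2 / (s1 + s2)))"
  proof -
    have "- qu / (2 * s1) + - (qw - 2 * b + qu) / (2 * s2)
      = - qw / (2 * Sv) + - (qu - 2 * t * b + t * t * qw) / (2 * r)"
      unfolding L R k1 k3 by (simp only: k2)
    then show ?thesis by (simp only: rS Sv_def)
  qed
  have sq: "sqrt s1 ^ CARD('n) * sqrt s2 ^ CARD('n) = sqrt (s1 + s2) ^ CARD('n) * sqrt (s1 * s2 / (s1 + s2)) ^ CARD('n)"
  proof -
    have "sqrt s1 * sqrt s2 = sqrt (s1 + s2) * sqrt (s1 * s2 / (s1 + s2))"
      using S by (simp add: real_sqrt_mult[symmetric])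
    then show ?thesis by (metis power_mult_distrib)
  qed
  have "gd m1 s1 y * gd m2 s2 (z - y)
      = exp (- qu / (2 * s1) + - (qw - 2 * b + qu) / (2 * s2)) / (Z * Z * (sqrt s1 ^ CARD('n) * sqrt s2 ^ CARD('n)))"
    unfolding gd_def gq_def e1 e2 Q2 qu_def[symmetric] exp_add times_divide_times_eq
    by (simp add: mult_ac)
  also have "\<dots> = exp (- qw / (2 * (s1 + s2)) + - (qu - 2 * t * b + t * t * qw) / (2 * (s1 * s2 / (s1 + s2))))
       / (Z * Z * (sqrt (s1 + s2) ^ CARD('n) * sqrt (s1 * s2 / (s1 + s2)) ^ CARD('n)))"
    by (simp only: expo sq)
  also have "\<dots> = gd (m1 + m2) (s1 + s2) z * gd (m1 + t *\<^sub>R (z - m1 - m2)) (s1 * s2 / (s1 + s2)) y"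
    unfolding gd_def gq_def e3 e4 Q4 qw_def[symmetric] exp_add times_divide_times_eq
    by (simp add: mult_ac)
  finally show ?thesis by (simp add: t_def)
qed

end


context gsig
begin

lemma gd_conv_dens:
  assumes s1: "s1 > 0" and s2: "s2 > 0"
  shows "(\<integral>\<^sup>+y. ennreal (gd m1 s1 y * gd m2 s2 (z - y)) \<partial>lborel) = ennreal (gd (m1 + m2) (s1 + s2) z)"
proof -
  let ?c = "m1 + (s1 / (s1 + s2)) *\<^sub>R (z - m1 - m2)"
  let ?r = "s1 * s2 / (s1 + s2)"
  have r: "?r > 0" using s1 s2 by simp
  have S: "s1 + s2 > 0" using s1 s2 by simp
  have "(\<integral>\<^sup>+y. ennreal (gd m1 s1 y * gd m2 s2 (z - y)) \<partial>lborel)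
      = (\<integral>\<^sup>+y. ennreal (gd (m1 + m2) (s1 + s2) z) * ennreal (gd ?c ?r y) \<partial>lborel)"
    using gd_nonneg[OF S] gd_nonneg[OF r]
    by (intro nn_integral_cong) (simp add: gd_conv_pt[OF s1 s2] ennreal_mult)
  also have "\<dots> = ennreal (gd (m1 + m2) (s1 + s2) z) * (\<integral>\<^sup>+y. ennreal (gd ?c ?r y) \<partial>lborel)"
    by (rule nn_integral_cmult) simp
  also have "\<dots> = ennreal (gd (m1 + m2) (s1 + s2) z)"
    by (simp add: gd_int[OF r])
  finally show ?thesis .
qed

lemma gd_conv:
  fixes f :: "real^'n \<Rightarrow> ennreal"
  assumes s1: "s1 > 0" and s2: "s2 > 0" and f[measurable]: "f \<in> borel_measurable borel"
  shows "(\<integral>\<^sup>+y. (\<integral>\<^sup>+x. f (y + x) * ennreal (gd m2 s2 x) \<partial>lborel) * ennreal (gd m1 s1 y) \<partial>lborel)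
       = (\<integral>\<^sup>+z. f z * ennreal (gd (m1 + m2) (s1 + s2) z) \<partial>lborel)"
proof -
  have "(\<integral>\<^sup>+z. f z * ennreal (gd (m1 + m2) (s1 + s2) z) \<partial>lborel)
      = (\<integral>\<^sup>+z. f z * (\<integral>\<^sup>+y. ennreal (gd m1 s1 y * gd m2 s2 (z - y)) \<partial>lborel) \<partial>lborel)"
    by (simp add: gd_conv_dens[OF s1 s2])
  also have "\<dots> = (\<integral>\<^sup>+z. (\<integral>\<^sup>+y. f z * ennreal (gd m1 s1 y * gd m2 s2 (z - y)) \<partial>lborel) \<partial>lborel)"
    by (intro nn_integral_cong nn_integral_cmult[symmetric]) simp
  also have "\<dots> = (\<integral>\<^sup>+y. (\<integral>\<^sup>+z. f z * ennreal (gd m1 s1 y * gd m2 s2 (z - y)) \<partial>lborel) \<partial>lborel)"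
    by (rule lborel_pair.Fubini'[symmetric]) measurable
  also have "\<dots> = (\<integral>\<^sup>+y. (\<integral>\<^sup>+x. f (y + x) * ennreal (gd m2 s2 x) \<partial>lborel) * ennreal (gd m1 s1 y) \<partial>lborel)"
  proof (rule nn_integral_cong)
    fix y :: "real^'n"
    have "(\<integral>\<^sup>+z. f z * ennreal (gd m1 s1 y * gd m2 s2 (z - y)) \<partial>lborel)
        = (\<integral>\<^sup>+z. ennreal (gd m1 s1 y) * (f z * ennreal (gd m2 s2 (z - y))) \<partial>lborel)"
      using gd_nonneg[OF s1] gd_nonneg[OF s2]
      by (intro nn_integral_cong) (simp add: ennreal_mult mult_ac)
    also have "\<dots> = ennreal (gd m1 s1 y) * (\<integral>\<^sup>+z. f z * ennreal (gd m2 s2 (z - y)) \<partial>lborel)"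
      by (rule nn_integral_cmult) simp
    also have "(\<integral>\<^sup>+z. f z * ennreal (gd m2 s2 (z - y)) \<partial>lborel)
        = ennreal (\<bar>1::real\<bar> ^ CARD('n)) * (\<integral>\<^sup>+x. f (y + (1::real) *\<^sub>R x) * ennreal (gd m2 s2 (y + (1::real) *\<^sub>R x - y)) \<partial>lborel)"
      by (rule nn_integral_affine_vec) simp_all
    also have "\<dots> = (\<integral>\<^sup>+x. f (y + x) * ennreal (gd m2 s2 x) \<partial>lborel)"
      by simp
    finally show "(\<integral>\<^sup>+z. f z * ennreal (gd m1 s1 y * gd m2 s2 (z - y)) \<partial>lborel)
        = (\<integral>\<^sup>+x. f (y + x) * ennreal (gd m2 s2 x) \<partial>lborel) * ennreal (gd m1 s1 y)"
      by (simp add: mult.commute)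
  qed
  finally show ?thesis ..
qed

end


primrec mk :: "real \<Rightarrow> real^'n \<Rightarrow> real^'n \<Rightarrow> nat \<Rightarrow> real^'n" where
  "mk eta mu th 0 = th"
| "mk eta mu th (Suc k) = (1 - 2 * eta) *\<^sub>R mk eta mu th k + (2 * eta) *\<^sub>R mu"

primrec sk :: "real \<Rightarrow> nat \<Rightarrow> real" where
  "sk eta 0 = 0"
| "sk eta (Suc k) = (1 - 2 * eta)\<^sup>2 * sk eta k + (2 * eta)\<^sup>2"

lemma sk_pos: "eta > 0 \<Longrightarrow> k \<ge> 1 \<Longrightarrow> sk eta k > 0"
proof (induction k)
  case 0 then show ?case by simp
next
  case (Suc k)
  have "(1 - 2 * eta)\<^sup>2 * sk eta k \<ge> 0"
  proof (cases "k \<ge> 1")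
    case True then show ?thesis using Suc by (simp add: less_imp_le)
  next
    case False then have "k = 0" by simp
    then show ?thesis by simp
  qed
  moreover have "(2 * eta)\<^sup>2 > 0" using Suc by simp
  ultimately show ?case by (simp only: sk.simps)
qed

lemma sgd_iter_upd: "j > k \<Longrightarrow> sgd_iter eta th (xs(j := y)) k = sgd_iter eta th xs k"
  by (induction k) auto

lemma sgd_iter_Suc': "sgd_iter eta th xs (Suc k) = (1 - 2 * eta) *\<^sub>R sgd_iter eta th xs k + (2 * eta) *\<^sub>R xs (Suc k)"
  by (simp add: algebra_simps)

locale sgdloc = gsig Sigma for Sigma :: "real^'n^'n" +
  fixes mu :: "real^'n" and eta :: real
  assumes eta_pos: "0 < eta" and eta_less: "eta < 1/2"
begin

abbreviation "D \<equiv> mvnormal mu Sigma"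

lemma D_eq: "D = density lborel (\<lambda>x. ennreal (gd mu 1 x))"
  by (simp add: mvnormal_def mvn_eq)

lemma sets_D[measurable_cong]: "sets D = sets borel"
  by (simp add: D_eq)

lemma space_D: "space D = UNIV"
  by (simp add: D_eq)

lemma prob_D: "prob_space D"
proof
  show "emeasure D (space D) = 1"
    by (simp add: D_eq emeasure_density gd_int)
qed

interpretation PD: product_prob_space "\<lambda>_::nat. D"
  by (simp add: product_prob_space_def product_sigma_finite_def prob_D prob_space_imp_sigma_finite
      product_prob_space_axioms_def)

lemma comp_meas: "j \<in> I \<Longrightarrow> (\<lambda>xs. xs j) \<in> borel_measurable (PiM I (\<lambda>_. D))"
  using measurable_component_singleton[of j I "\<lambda>_. D"]
  by (simp add: measurable_cong_sets[OF refl sets_D])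

lemma sgd_meas: "{1..i} \<subseteq> I \<Longrightarrow> (\<lambda>xs. sgd_iter eta th xs i) \<in> borel_measurable (PiM I (\<lambda>_. D))"
proof (induction i)
  case 0 then show ?case by simp
next
  case (Suc i)
  then have "Suc i \<in> I" "{1..i} \<subseteq> I" by auto
  then have a: "(\<lambda>xs. sgd_iter eta th xs i) \<in> borel_measurable (PiM I (\<lambda>_. D))"
    and b: "(\<lambda>xs. xs (Suc i)) \<in> borel_measurable (PiM I (\<lambda>_. D))"
    using Suc.IH comp_meas[of "Suc i" I] by auto
  show ?case unfolding sgd_iter_Suc'
    by (intro borel_measurable_add borel_measurable_scaleR borel_measurable_const a b)
qed

lemma gd_int_D:
  assumes f[measurable]: "f \<in> borel_measurable borel"
  shows "(\<integral>\<^sup>+y. f y \<partial>D) = (\<integral>\<^sup>+y. f y * ennreal (gd mu 1 y) \<partial>lborel)"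
  unfolding D_eq by (simp add: nn_integral_density mult.commute)

abbreviation "r \<equiv> 1 - 2 * eta"
abbreviation "w \<equiv> 2 * eta"

lemma r_pos: "r > 0" using eta_less by simp
lemma w_pos: "w > 0" using eta_pos by simp

lemma sgd_law:
  assumes k: "k \<ge> 1" and f[measurable]: "f \<in> borel_measurable borel"
  shows "(\<integral>\<^sup>+xs. f (sgd_iter eta th xs k) \<partial>PiM {1..k} (\<lambda>_. D))
       = (\<integral>\<^sup>+z. f z * ennreal (gd (mk eta mu th k) (sk eta k) z) \<partial>lborel)"
  using k f
proof (induction k arbitrary: f rule: dec_induct)
  case base
  note [measurable] = base
  have "(\<integral>\<^sup>+xs. f (sgd_iter eta th xs 1) \<partial>PiM {1..1} (\<lambda>_. D))
      = (\<integral>\<^sup>+xs. (\<lambda>y. f (r *\<^sub>R th + w *\<^sub>R y)) (xs (Suc 0)) \<partial>PiM {Suc 0} (\<lambda>_. D))"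
    by (simp add: sgd_iter_Suc'[where k=0, simplified] One_nat_def)
  also have "\<dots> = (\<integral>\<^sup>+y. f (r *\<^sub>R th + w *\<^sub>R y) \<partial>D)"
    by (rule PD.product_nn_integral_singleton) (simp add: measurable_cong_sets[OF sets_D refl])
  also have "\<dots> = (\<integral>\<^sup>+y. f (r *\<^sub>R th + w *\<^sub>R y) * ennreal (gd mu 1 y) \<partial>lborel)"
    by (rule gd_int_D) simp
  also have "\<dots> = (\<integral>\<^sup>+z. f z * ennreal (gd (r *\<^sub>R th + w *\<^sub>R mu) (w\<^sup>2 * 1) z) \<partial>lborel)"
    using w_pos by (intro gd_affine) auto
  also have "\<dots> = (\<integral>\<^sup>+z. f z * ennreal (gd (mk eta mu th 1) (sk eta 1) z) \<partial>lborel)"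
    by simp
  finally show ?case .
next
  case (step k)
  note [measurable] = step.prems
  have kpos: "sk eta k > 0" using sk_pos[OF eta_pos step.hyps(1)] .
  have ins: "{1..Suc k} = insert (Suc k) {1..k}" by auto
  define G where "G = (\<lambda>v. \<integral>\<^sup>+x. f (v + x) * ennreal (gd (w *\<^sub>R mu) (w\<^sup>2 * 1) x) \<partial>lborel)"
  have G_meas[measurable]: "G \<in> borel_measurable borel"
    unfolding G_def by measurable
  have inner: "(\<integral>\<^sup>+y. f (sgd_iter eta th (xs(Suc k := y)) (Suc k)) \<partial>D) = G (r *\<^sub>R sgd_iter eta th xs k)" for xs
  proof -
    have "(\<integral>\<^sup>+y. f (sgd_iter eta th (xs(Suc k := y)) (Suc k)) \<partial>D)
        = (\<integral>\<^sup>+y. f (r *\<^sub>R sgd_iter eta th xs k + w *\<^sub>R y) \<partial>D)"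
      by (simp del: sgd_iter.simps add: sgd_iter_Suc' sgd_iter_upd)
    also have "\<dots> = (\<integral>\<^sup>+y. f (r *\<^sub>R sgd_iter eta th xs k + w *\<^sub>R y) * ennreal (gd mu 1 y) \<partial>lborel)"
      by (rule gd_int_D) simp
    also have "\<dots> = (\<integral>\<^sup>+y. (\<lambda>z. f (r *\<^sub>R sgd_iter eta th xs k + z)) (0 + w *\<^sub>R y) * ennreal (gd mu 1 y) \<partial>lborel)"
      by simp
    also have "\<dots> = (\<integral>\<^sup>+z. (\<lambda>z. f (r *\<^sub>R sgd_iter eta th xs k + z)) z * ennreal (gd (0 + w *\<^sub>R mu) (w\<^sup>2 * 1) z) \<partial>lborel)"
      using w_pos by (intro gd_affine) auto
    also have "\<dots> = G (r *\<^sub>R sgd_iter eta th xs k)"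
      by (simp add: G_def)
    finally show ?thesis .
  qed
  have "(\<integral>\<^sup>+xs. f (sgd_iter eta th xs (Suc k)) \<partial>PiM {1..Suc k} (\<lambda>_. D))
      = (\<integral>\<^sup>+xs. (\<integral>\<^sup>+y. f (sgd_iter eta th (xs(Suc k := y)) (Suc k)) \<partial>D) \<partial>PiM {1..k} (\<lambda>_. D))"
  proof -
    have Tm: "(\<lambda>xs. sgd_iter eta th xs (Suc k)) \<in> borel_measurable (PiM (insert (Suc k) {1..k}) (\<lambda>_. D))"
      by (rule sgd_meas) auto
    show ?thesis unfolding ins
      by (rule PD.product_nn_integral_insert[OF _ _ measurable_compose[OF Tm step.prems]]) auto
  qed
  also have "\<dots> = (\<integral>\<^sup>+xs. G (r *\<^sub>R sgd_iter eta th xs k) \<partial>PiM {1..k} (\<lambda>_. D))"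
    by (simp only: inner)
  also have "\<dots> = (\<integral>\<^sup>+u. G (r *\<^sub>R u) * ennreal (gd (mk eta mu th k) (sk eta k) u) \<partial>lborel)"
    by (rule step.IH) simp
  also have "\<dots> = (\<integral>\<^sup>+u. G (0 + r *\<^sub>R u) * ennreal (gd (mk eta mu th k) (sk eta k) u) \<partial>lborel)"
    by simp
  also have "\<dots> = (\<integral>\<^sup>+v. G v * ennreal (gd (0 + r *\<^sub>R mk eta mu th k) (r\<^sup>2 * sk eta k) v) \<partial>lborel)"
    using r_pos kpos by (intro gd_affine) auto
  also have "\<dots> = (\<integral>\<^sup>+v. (\<integral>\<^sup>+x. f (v + x) * ennreal (gd (w *\<^sub>R mu) (w\<^sup>2 * 1) x) \<partial>lborel) * ennreal (gd (r *\<^sub>R mk eta mu th k) (r\<^sup>2 * sk eta k) v) \<partial>lborel)"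
    by (simp add: G_def)
  also have "\<dots> = (\<integral>\<^sup>+z. f z * ennreal (gd (r *\<^sub>R mk eta mu th k + w *\<^sub>R mu) (r\<^sup>2 * sk eta k + w\<^sup>2 * 1) z) \<partial>lborel)"
    using r_pos kpos w_pos by (intro gd_conv) auto
  also have "\<dots> = (\<integral>\<^sup>+z. f z * ennreal (gd (mk eta mu th (Suc k)) (sk eta (Suc k)) z) \<partial>lborel)"
    by simp
  finally show ?case .
qed

lemma sgd_dist_eq:
  assumes k: "k \<ge> 1"
  shows "sgd_dist eta th D k = density lborel (\<lambda>z. ennreal (gd (mk eta mu th k) (sk eta k) z))"
proof (rule measure_eqI)
  show "sets (sgd_dist eta th D k) = sets (density lborel (\<lambda>z. ennreal (gd (mk eta mu th k) (sk eta k) z)))"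
    by (simp add: sgd_dist_def)
  fix A assume A0: "A \<in> sets (sgd_dist eta th D k)"
  then have A[measurable]: "A \<in> sets borel" by (simp add: sgd_dist_def)
  have Tm: "(\<lambda>xs. sgd_iter eta th xs k) \<in> borel_measurable (PiM {1..k} (\<lambda>_. D))"
    by (rule sgd_meas) simp
  have "emeasure (sgd_dist eta th D k) A = (\<integral>\<^sup>+z. indicator A z \<partial>sgd_dist eta th D k)"
    by (rule nn_integral_indicator[symmetric]) (rule A0)
  also have "\<dots> = (\<integral>\<^sup>+xs. indicator A (sgd_iter eta th xs k) \<partial>PiM {1..k} (\<lambda>_. D))"
    unfolding sgd_dist_def by (rule nn_integral_distr[OF Tm]) simp
  also have "\<dots> = (\<integral>\<^sup>+z. indicator A z * ennreal (gd (mk eta mu th k) (sk eta k) z) \<partial>lborel)"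
    by (rule sgd_law[OF k]) simp
  also have "\<dots> = emeasure (density lborel (\<lambda>z. ennreal (gd (mk eta mu th k) (sk eta k) z))) A"
    by (simp add: emeasure_density mult.commute)
  finally show "emeasure (sgd_dist eta th D k) A = emeasure (density lborel (\<lambda>z. ennreal (gd (mk eta mu th k) (sk eta k) z))) A" .
qed

end


lemma null_sets_density_pos:
  fixes f :: "'a::euclidean_space \<Rightarrow> real"
  assumes [measurable]: "f \<in> borel_measurable borel" and pos: "\<And>x. f x > 0"
  shows "null_sets (density lborel (\<lambda>x. ennreal (f x))) = null_sets lborel"
proof (intro set_eqI iffI)
  fix A assume "A \<in> null_sets (density lborel (\<lambda>x. ennreal (f x)))"
  then have A: "A \<in> sets lborel" "AE x in lborel. x \<in> A \<longrightarrow> ennreal (f x) = 0"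
    by (subst (asm) null_sets_density_iff; simp)+
  have "AE x in lborel. x \<notin> A" using A(2)
  proof eventually_elim
    case (elim x) then show ?case using pos[of x] by (auto simp: ennreal_eq_0_iff)
  qed
  then show "A \<in> null_sets lborel" using A by (simp add: AE_iff_null_sets)
next
  fix A :: "'a set" assume A: "A \<in> null_sets lborel"
  then have "AE x in lborel. x \<notin> A" by (metis AE_iff_null_sets null_setsD2)
  then have "AE x in lborel. x \<in> A \<longrightarrow> ennreal (f x) = 0" by (auto elim!: AE_mp)
  moreover have "A \<in> sets borel" using null_setsD2[OF A] by simp
  ultimately show "A \<in> null_sets (density lborel (\<lambda>x. ennreal (f x)))"
    by (simp add: null_sets_density_iff)
qed

context gsig
begin

lemma renyi_pt:
  assumes s: "s > 0"
  shows "gd a s x powr alpha * gd b s x powr (1 - alpha)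
       = gd (alpha *\<^sub>R a + (1 - alpha) *\<^sub>R b) s x * exp (alpha * (alpha - 1) * ((a - b) \<bullet> (A *v (a - b))) / (2 * s))"
proof -
  define N where "N = Z * sqrt s ^ CARD('n)"
  have N: "N > 0" using Z_pos s by (simp add: N_def)
  define c where "c = alpha *\<^sub>R a + (1 - alpha) *\<^sub>R b"
  define u where "u = x - c"
  define d where "d = a - b"
  have ea: "x - a = u - (1 - alpha) *\<^sub>R d" by (simp add: u_def c_def d_def algebra_simps)
  have eb: "x - b = u + alpha *\<^sub>R d" by (simp add: u_def c_def d_def algebra_simps)
  define qu where "qu = u \<bullet> (A *v u)"
  define qd where "qd = d \<bullet> (A *v d)"
  define bb where "bb = u \<bullet> (A *v d)"
  have Qa: "(x - a) \<bullet> (A *v (x - a)) = qu - 2 * (1 - alpha) * bb + (1 - alpha) * (1 - alpha) * qd"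
    unfolding ea qu_def qd_def bb_def using q_diff[OF A_sym, of u "(1 - alpha) *\<^sub>R d"]
    by (simp add: q_scale q_scale_right)
  have Qb: "(x - b) \<bullet> (A *v (x - b)) = qu + 2 * alpha * bb + alpha * alpha * qd"
    unfolding eb qu_def qd_def bb_def using q_add[OF A_sym, of u "alpha *\<^sub>R d"]
    by (simp add: q_scale q_scale_right)
  have expo: "alpha * (- (qu - 2 * (1 - alpha) * bb + (1 - alpha) * (1 - alpha) * qd) / (2 * s))
      + (1 - alpha) * (- (qu + 2 * alpha * bb + alpha * alpha * qd) / (2 * s))
      = - qu / (2 * s) + alpha * (alpha - 1) * qd / (2 * s)"
    using s by (simp add: field_simps)
  have "gd a s x powr alpha * gd b s x powr (1 - alpha)
      = (exp (- ((x - a) \<bullet> (A *v (x - a))) / (2 * s)) / N) powr alpha * (exp (- ((x - b) \<bullet> (A *v (x - b))) / (2 * s)) / N) powr (1 - alpha)"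
    by (simp add: gd_def gq_def N_def)
  also have "\<dots> = exp (- ((x - a) \<bullet> (A *v (x - a))) / (2 * s) * alpha + - ((x - b) \<bullet> (A *v (x - b))) / (2 * s) * (1 - alpha))
      / (N powr alpha * N powr (1 - alpha))"
    by (simp only: powr_divide exp_powr_real times_divide_times_eq exp_add[symmetric])
  also have "N powr alpha * N powr (1 - alpha) = N"
    using N by (simp add: powr_add[symmetric])
  also have "- ((x - a) \<bullet> (A *v (x - a))) / (2 * s) * alpha + - ((x - b) \<bullet> (A *v (x - b))) / (2 * s) * (1 - alpha)
      = - qu / (2 * s) + alpha * (alpha - 1) * qd / (2 * s)"
    unfolding Qa Qb using s by (simp add: field_simps)
  also have "exp (- qu / (2 * s) + alpha * (alpha - 1) * qd / (2 * s))
      = exp (- qu / (2 * s)) * exp (alpha * (alpha - 1) * qd / (2 * s))"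
    by (rule exp_add)
  also have "exp (- qu / (2 * s)) * exp (alpha * (alpha - 1) * qd / (2 * s)) / N
      = gd c s x * exp (alpha * (alpha - 1) * qd / (2 * s))"
    by (simp add: gd_def gq_def N_def qu_def u_def)
  finally show ?thesis by (simp add: c_def d_def qd_def)
qed

lemma renyi_gauss:
  assumes s: "s > 0" and alpha: "alpha > 1"
  shows "renyi_divergence alpha (density lborel (\<lambda>z. ennreal (gd a s z))) (density lborel (\<lambda>z. ennreal (gd b s z)))
       = ereal (alpha * ((a - b) \<bullet> (A *v (a - b))) / (2 * s))"
proof -
  let ?P = "density lborel (\<lambda>z. ennreal (gd a s z))"
  let ?Q = "density lborel (\<lambda>z. ennreal (gd b s z))"
  let ?K = "exp (alpha * (alpha - 1) * ((a - b) \<bullet> (A *v (a - b))) / (2 * s))"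
  let ?c = "alpha *\<^sub>R a + (1 - alpha) *\<^sub>R b"
  have ac: "absolutely_continuous ?Q ?P"
    unfolding absolutely_continuous_def
    using null_sets_density_pos[OF gd_measurable gd_pos[OF s]] by simp
  have RP: "AE x in lborel. enn2real (RN_deriv lborel ?P x) = gd a s x"
  proof -
    have "AE x in lborel. ennreal (gd a s x) = RN_deriv lborel ?P x"
      by (rule sigma_finite_measure.RN_deriv_unique[OF sigma_finite_lborel]) simp_all
    then show ?thesis
    proof eventually_elim
      case (elim x) then show ?case using gd_nonneg[OF s, of a x] by (metis enn2real_ennreal)
    qed
  qed
  have RQ: "AE x in lborel. enn2real (RN_deriv lborel ?Q x) = gd b s x"
  proof -
    have "AE x in lborel. ennreal (gd b s x) = RN_deriv lborel ?Q x"
      by (rule sigma_finite_measure.RN_deriv_unique[OF sigma_finite_lborel]) simp_all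
    then show ?thesis
    proof eventually_elim
      case (elim x) then show ?case using gd_nonneg[OF s, of b x] by (metis enn2real_ennreal)
    qed
  qed
  have I: "(\<integral>\<^sup>+x. ennreal (enn2real (RN_deriv lborel ?P x) powr alpha * enn2real (RN_deriv lborel ?Q x) powr (1 - alpha)) \<partial>lborel)
      = ennreal ?K"
  proof -
    have "(\<integral>\<^sup>+x. ennreal (enn2real (RN_deriv lborel ?P x) powr alpha * enn2real (RN_deriv lborel ?Q x) powr (1 - alpha)) \<partial>lborel)
        = (\<integral>\<^sup>+x. ennreal (gd ?c s x * ?K) \<partial>lborel)"
      using RP RQ by (intro nn_integral_cong_AE) (auto elim!: AE_mp simp: renyi_pt[OF s])
    also have "\<dots> = (\<integral>\<^sup>+x. ennreal ?K * ennreal (gd ?c s x) \<partial>lborel)"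
      using gd_nonneg[OF s] by (intro nn_integral_cong) (simp add: ennreal_mult mult.commute)
    also have "\<dots> = ennreal ?K * (\<integral>\<^sup>+x. ennreal (gd ?c s x) \<partial>lborel)"
      by (rule nn_integral_cmult) simp
    also have "\<dots> = ennreal ?K" by (simp add: gd_int[OF s])
    finally show ?thesis .
  qed
  have "ln ?K / (alpha - 1) = alpha * (alpha - 1) * ((a - b) \<bullet> (A *v (a - b))) / (2 * s) / (alpha - 1)"
    by simp
  also have "alpha * (alpha - 1) * ((a - b) \<bullet> (A *v (a - b))) / (2 * s) = (alpha - 1) * (alpha * ((a - b) \<bullet> (A *v (a - b))) / (2 * s))"
    by simp
  also have "(alpha - 1) * (alpha * ((a - b) \<bullet> (A *v (a - b))) / (2 * s)) / (alpha - 1) = alpha * ((a - b) \<bullet> (A *v (a - b))) / (2 * s)"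
    using alpha by (intro nonzero_mult_div_cancel_left) simp
  then show ?thesis
    unfolding renyi_divergence_def Let_def using ac I by simp
qed

end


lemma mk_diff: "mk eta mu th1 k - mk eta mu th2 k = (1 - 2 * eta) ^ k *\<^sub>R (th1 - th2)"
proof (induction k)
  case 0 then show ?case by simp
next
  case (Suc k)
  have "mk eta mu th1 (Suc k) - mk eta mu th2 (Suc k) = (1 - 2 * eta) *\<^sub>R (mk eta mu th1 k - mk eta mu th2 k)"
    by (simp add: scaleR_diff_right)
  also have "\<dots> = (1 - 2 * eta) ^ Suc k *\<^sub>R (th1 - th2)" by (simp add: Suc.IH)
  finally show ?case .
qed

lemma sk_lower:
  assumes "0 < eta" "eta < 1/2"
  shows "real k * (2 * eta)\<^sup>2 * ((1 - 2 * eta) ^ k)\<^sup>2 \<le> sk eta k"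
proof (induction k)
  case 0 then show ?case by simp
next
  case (Suc k)
  let ?r = "1 - 2 * eta" and ?w = "(2 * eta)\<^sup>2"
  have r0: "0 \<le> ?r" "?r \<le> 1" using assms by auto
  have a: "0 \<le> ?r ^ Suc k" using r0 by simp
  have b: "?r ^ Suc k \<le> 1" using r0 by (intro power_le_one) auto
  have rk: "(?r ^ Suc k)\<^sup>2 \<le> 1" by (rule power_le_one[OF a b])
  have w0: "?w \<ge> 0" by simp
  have "real (Suc k) * ?w * (?r ^ Suc k)\<^sup>2 = ?r\<^sup>2 * (real k * ?w * (?r ^ k)\<^sup>2) + ?w * (?r ^ Suc k)\<^sup>2"
    by (simp add: algebra_simps power2_eq_square)
  also have "\<dots> \<le> ?r\<^sup>2 * sk eta k + ?w * 1"
    using Suc.IH rk w0 by (intro add_mono mult_left_mono) auto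
  also have "\<dots> = sk eta (Suc k)" by simp
  finally show ?case .
qed

theorem theorem1:
  fixes mu theta0 v :: "real^'n" and Sigma :: "real^'n^'n" and eta alpha :: real and k :: nat
  assumes "sym_pos_def_mat Sigma"
    and "0 < eta" and "eta < 1/2"
    and "k \<ge> 1"
    and "alpha > 1"
  shows "renyi_divergence alpha
           (sgd_dist eta (theta0 - (2 * eta) *\<^sub>R (theta0 - v)) (mvnormal mu Sigma) k)
           (sgd_dist eta (theta0 - (2 * eta) *\<^sub>R (theta0 + v)) (mvnormal mu Sigma) k)
         \<le> ereal (2 * alpha / real k * (v \<bullet> (matrix_inv Sigma *v v)))"
proof -
  interpret sgdloc Sigma mu eta
    using assms by unfold_locales auto
  let ?tp = "theta0 - (2 * eta) *\<^sub>R (theta0 - v)"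
  let ?tm = "theta0 - (2 * eta) *\<^sub>R (theta0 + v)"
  let ?s = "sk eta k"
  let ?r = "1 - 2 * eta"
  have s: "?s > 0" using sk_pos[OF assms(2) assms(4)] .
  have eq: "renyi_divergence alpha (sgd_dist eta ?tp D k) (sgd_dist eta ?tm D k)
      = ereal (alpha * ((mk eta mu ?tp k - mk eta mu ?tm k) \<bullet> (A *v (mk eta mu ?tp k - mk eta mu ?tm k))) / (2 * ?s))"
    unfolding sgd_dist_eq[OF assms(4)] by (rule renyi_gauss[OF s assms(5)])
  define Qv where "Qv = v \<bullet> (A *v v)"
  have Qv: "Qv \<ge> 0"
  proof (cases "v = 0")
    case True then show ?thesis by (simp add: Qv_def)
  next
    case False then show ?thesis using A_pd by (simp add: Qv_def sym_pos_def_mat_def less_imp_le)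
  qed
  have tpm: "?tp - ?tm = (2 * eta) *\<^sub>R v + (2 * eta) *\<^sub>R v"
    by (simp add: scaleR_diff_right scaleR_add_right)
  also have "\<dots> = (4 * eta) *\<^sub>R v" by (simp only: scaleR_left_distrib[symmetric]) simp
  finally have tpm: "?tp - ?tm = (4 * eta) *\<^sub>R v" .
  have d: "mk eta mu ?tp k - mk eta mu ?tm k = (?r ^ k * (4 * eta)) *\<^sub>R v"
    by (simp only: mk_diff tpm scaleR_scaleR)
  have Qd: "(mk eta mu ?tp k - mk eta mu ?tm k) \<bullet> (A *v (mk eta mu ?tp k - mk eta mu ?tm k))
      = 4 * (real k * (2 * eta)\<^sup>2 * (?r ^ k)\<^sup>2) * Qv / real k"
    using assms(4) unfolding d q_scale Qv_def by (simp add: power2_eq_square field_simps)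
  have kpos: "real k > 0" using assms(4) by simp
  have low: "real k * (2 * eta)\<^sup>2 * (?r ^ k)\<^sup>2 \<le> ?s" using sk_lower[OF assms(2,3)] .
  have "alpha * (4 * (real k * (2 * eta)\<^sup>2 * (?r ^ k)\<^sup>2) * Qv / real k) / (2 * ?s)
      \<le> alpha * (4 * ?s * Qv / real k) / (2 * ?s)"
    using assms(5) s kpos Qv low
    by (intro divide_right_mono mult_left_mono mult_right_mono) auto
  also have "\<dots> = 2 * alpha / real k * Qv"
    using s kpos by (simp add: field_simps)
  finally have "alpha * ((mk eta mu ?tp k - mk eta mu ?tm k) \<bullet> (A *v (mk eta mu ?tp k - mk eta mu ?tm k))) / (2 * ?s)
      \<le> 2 * alpha / real k * Qv"
    unfolding Qd .
  then show ?thesis using eq by (simp add: Qv_def)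
qed


end
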